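(* Let $\mathscr N$ be a weakly reversible chemical reaction network. If $\mathscr N=\mathscr N_1\cup\cdots\cup\mathscr N_k$ is an incidence independent decomposition, then each subnetwork $\mathscr N_i$ is weakly reversible, i.e., the decomposition is weakly reversible.
   Context: A chemical reaction network (CRN) $\mathscr N=(\mathscr S,\mathscr C,\mathscr R)$ consists of: - a finite set $\mathscr S$ of species; - a finite set $\mathscr C\subseteq\mathbb R^{\mathscr S}_{\ge0}$ of complexes; - a set $\mathscr R\subseteq\mathscr C\times\mathscr C$ of reactions, viewed as a directed graph on $\mathscr C$, with no reaction $y\to y$ and every complex occurring in some reaction. The network is weakly reversible if each of its linkage classes (connected components of the underlying undirected graph) is strongly connected. A decomposition $\mathscr N=\mathscr N_1\cup\cdots\cup\mathscr N_k$ is the set of subnetworks induced by a partition $\{\mathscr R_1,\ldots,\mathscr R_k\}$ of $\mathscr R$; $\mathscr N_i$ has reactions $\mathscr R_i$ and the complexes occurring in them. A decomposition is weakly reversible if every subnetwork is weakly reversible. The incidence map is $I_a:\mathbb R^{\mathscr R}\to\mathbb R^{\mathscr C}$, sending the basis vector of $y\to y'$ to $\omega_{y'}-\omega_y$. The decomposition is incidence independent if $\operatorname{Im}I_a$ is the direct sum of the images of the restrictions $I_{a,i}$ of $I_a$ to $\mathbb R^{\mathscr R_i}$. Equivalently, $n-l=\sum_i(n_i-l_i)$, with $n$ and $l$ the numbers of complexes and linkage classes of $\mathscr N$, and $n_i$ and $l_i$ those of $\mathscr N_i$. *)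

theory Defs
  imports Complex_Main
begin

(* Complexes are vectors in R^S, represented as functions 's => real
   (zero outside the species set S). A reaction is a pair (y, y'). *)
type_synonym 's complex = "'s \<Rightarrow> real"
type_synonym 's reaction = "'s complex \<times> 's complex"

definition crn :: "'s set \<Rightarrow> 's complex set \<Rightarrow> 's reaction set \<Rightarrow> bool" where
  "crn S C R \<longleftrightarrow>
     finite S \<and> finite C \<and>
     (\<forall>y\<in>C. (\<forall>s\<in>S. y s \<ge> 0) \<and> (\<forall>s. s \<notin> S \<longrightarrow> y s = 0)) \<and>
     R \<subseteq> C \<times> C \<and>
     (\<forall>y. (y, y) \<notin> R) \<and>
     (\<forall>y\<in>C. \<exists>r\<in>R. fst r = y \<or> snd r = y)"

definition complexes :: "('c \<times> 'c) set \<Rightarrow> 'c set" where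
  "complexes R = fst ` R \<union> snd ` R"

definition linkage_classes :: "('c \<times> 'c) set \<Rightarrow> 'c set set" where
  "linkage_classes R = {{b. (a, b) \<in> (R \<union> R\<inverse>)\<^sup>*} | a. a \<in> complexes R}"

definition strongly_connected :: "('c \<times> 'c) set \<Rightarrow> 'c set \<Rightarrow> bool" where
  "strongly_connected R L \<longleftrightarrow> (\<forall>a\<in>L. \<forall>b\<in>L. (a, b) \<in> R\<^sup>*)"

definition weakly_reversible :: "('c \<times> 'c) set \<Rightarrow> bool" where
  "weakly_reversible R \<longleftrightarrow> (\<forall>L\<in>linkage_classes R. strongly_connected R L)"

definition decomposition :: "('c \<times> 'c) set \<Rightarrow> (nat \<Rightarrow> ('c \<times> 'c) set) \<Rightarrow> nat \<Rightarrow> bool" where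
  "decomposition R Rs k \<longleftrightarrow>
     (\<Union>i<k. Rs i) = R \<and> (\<forall>i<k. Rs i \<noteq> {}) \<and>
     (\<forall>i<k. \<forall>j<k. i \<noteq> j \<longrightarrow> Rs i \<inter> Rs j = {})"

definition omega :: "'c \<Rightarrow> 'c \<Rightarrow> real" where
  "omega y = (\<lambda>z. if z = y then 1 else 0)"

definition incidence_image :: "('c \<times> 'c) set \<Rightarrow> ('c \<Rightarrow> real) set" where
  "incidence_image Rs =
     {(\<lambda>z. \<Sum>r\<in>Rs. alpha r * (omega (snd r) z - omega (fst r) z)) | alpha. True}"

(* Im I_a is the (internal) direct sum of the Im I_{a,i} *)
definition incidence_independent :: "('c \<times> 'c) set \<Rightarrow> (nat \<Rightarrow> ('c \<times> 'c) set) \<Rightarrow> nat \<Rightarrow> bool" where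
  "incidence_independent R Rs k \<longleftrightarrow>
     incidence_image R =
       {(\<lambda>z. \<Sum>i<k. v i z) | v. \<forall>i<k. v i \<in> incidence_image (Rs i)} \<and>
     (\<forall>v. (\<forall>i<k. v i \<in> incidence_image (Rs i)) \<and> (\<lambda>z. \<Sum>i<k. v i z) = (\<lambda>z. 0)
           \<longrightarrow> (\<forall>i<k. v i = (\<lambda>z. 0)))"

end

theory Submission
  imports Defs
begin

lemma omega_sum: "finite A \<Longrightarrow> (\<Sum>z\<in>A. omega y z) = (if y \<in> A then 1 else 0)"
  unfolding omega_def by (simp add: sum.delta')

lemma wr_of:
  assumes "\<forall>(a,b)\<in>E. (b,a)\<in>E\<^sup>*"
  shows "weakly_reversible E"
proof -
  have sub: "(E \<union> E\<inverse>)\<^sup>* \<subseteq> E\<^sup>*"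
  proof -
    have "E \<union> E\<inverse> \<subseteq> E\<^sup>*" using assms by auto
    hence "(E \<union> E\<inverse>)\<^sup>* \<subseteq> (E\<^sup>*)\<^sup>*" by (rule rtrancl_mono)
    thus ?thesis by simp
  qed
  show ?thesis unfolding weakly_reversible_def linkage_classes_def strongly_connected_def
  proof (clarify)
    fix a x y assume x: "(a,x) \<in> (E \<union> E\<inverse>)\<^sup>*" and y: "(a,y) \<in> (E \<union> E\<inverse>)\<^sup>*"
    have "(x,a) \<in> (E \<union> E\<inverse>)\<^sup>*"
    proof -
      have "(x,a) \<in> ((E \<union> E\<inverse>)\<inverse>)\<^sup>*" using x by (simp add: rtrancl_converse)
      moreover have "(E \<union> E\<inverse>)\<inverse> = E \<union> E\<inverse>" by auto
      ultimately show ?thesis by simp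
    qed
    hence "(x,y) \<in> (E \<union> E\<inverse>)\<^sup>*" using y by (rule rtrancl_trans)
    thus "(x,y) \<in> E\<^sup>*" using sub by auto
  qed
qed

lemma path_flow:
  assumes fin: "finite R" and p: "(b,a) \<in> R\<^sup>*"
  shows "\<exists>\<beta>::('c\<times>'c) \<Rightarrow> real. (\<forall>r. \<beta> r \<ge> 0) \<and>
     (\<forall>z. (\<Sum>r\<in>R. \<beta> r * (omega (snd r) z - omega (fst r) z)) = omega a z - omega b z)"
  using p
proof (induction rule: rtrancl_induct)
  case base
  show ?case by (rule exI[of _ "\<lambda>_. 0"]) simp
next
  case (step c a)
  then obtain \<beta> where b0: "\<forall>r. \<beta> r \<ge> 0" and bs: "\<forall>z. (\<Sum>r\<in>R. \<beta> r * (omega (snd r) z - omega (fst r) z)) = omega c z - omega b z"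
    by blast
  define \<gamma> where "\<gamma> = (\<lambda>r. \<beta> r + (if r = (c,a) then 1 else 0))"
  have "\<forall>r. \<gamma> r \<ge> 0" using b0 by (simp add: \<gamma>_def)
  moreover have "\<forall>z. (\<Sum>r\<in>R. \<gamma> r * (omega (snd r) z - omega (fst r) z)) = omega a z - omega b z"
  proof
    fix z
    have "(\<Sum>r\<in>R. \<gamma> r * (omega (snd r) z - omega (fst r) z))
       = (\<Sum>r\<in>R. \<beta> r * (omega (snd r) z - omega (fst r) z))
         + (\<Sum>r\<in>R. (if r = (c,a) then (omega (snd r) z - omega (fst r) z) else 0))"
      unfolding \<gamma>_def sum.distrib[symmetric] by (rule sum.cong) (auto simp: algebra_simps)
    also have "\<dots> = omega c z - omega b z + (omega a z - omega c z)"
      using bs step(2) fin by (simp add: sum.delta')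
    finally show "(\<Sum>r\<in>R. \<gamma> r * (omega (snd r) z - omega (fst r) z)) = omega a z - omega b z" by simp
  qed
  ultimately show ?case by blast
qed

lemma flow_reach:
  assumes fin: "finite E" and nn: "\<forall>r. \<alpha> r \<ge> (0::real)"
    and zero: "\<forall>z. (\<Sum>r\<in>E. \<alpha> r * (omega (snd r) z - omega (fst r) z)) = 0"
    and ab: "(a,b) \<in> E" and pos: "\<alpha> (a,b) > 0"
  shows "(b,a) \<in> E\<^sup>*"
proof (rule ccontr)
  assume na: "(b,a) \<notin> E\<^sup>*"
  define X where "X = {x. (b,x) \<in> E\<^sup>*} \<inter> (fst ` E \<union> snd ` E)"
  have fX: "finite X" unfolding X_def using fin by auto
  have "0 = (\<Sum>z\<in>X. \<Sum>r\<in>E. \<alpha> r * (omega (snd r) z - omega (fst r) z))"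
    using zero by simp
  also have "\<dots> = (\<Sum>r\<in>E. \<alpha> r * ((\<Sum>z\<in>X. omega (snd r) z) - (\<Sum>z\<in>X. omega (fst r) z)))"
    by (subst sum.swap) (simp add: sum_distrib_left sum_subtractf right_diff_distrib)
  also have "\<dots> = (\<Sum>r\<in>E. \<alpha> r * ((if snd r \<in> X then 1 else 0) - (if fst r \<in> X then 1 else 0)))"
    using fX by (simp add: omega_sum)
  finally have eq: "0 = (\<Sum>r\<in>E. \<alpha> r * ((if snd r \<in> X then 1 else 0) - (if fst r \<in> X then 1 else 0)))" .
  have nonneg: "\<forall>r\<in>E. \<alpha> r * ((if snd r \<in> X then 1 else 0) - (if fst r \<in> X then 1 else (0::real))) \<ge> 0"
  proof
    fix r assume r: "r \<in> E"
    obtain u w where rr: "r = (u,w)" by force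
    have "fst r \<in> X \<Longrightarrow> snd r \<in> X"
      using r unfolding X_def rr by (auto intro: rtrancl_into_rtrancl rev_image_eqI)
    thus "\<alpha> r * ((if snd r \<in> X then 1 else 0) - (if fst r \<in> X then 1 else (0::real))) \<ge> 0"
      using nn[rule_format, of r] by auto
  qed
  have bX: "b \<in> X" "a \<notin> X" using ab na unfolding X_def by force+
  have "0 < (\<Sum>r\<in>E. \<alpha> r * ((if snd r \<in> X then 1 else 0) - (if fst r \<in> X then 1 else (0::real))))"
    by (rule sum_pos2[OF fin ab]) (use bX pos nonneg in auto)
  with eq show False by simp
qed

theorem mainTheorem5:
  fixes S :: "'s set" and C :: "'s complex set" and R :: "'s reaction set"
    and Rs :: "nat \<Rightarrow> 's reaction set" and k :: nat
  assumes "crn S C R"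
    and "weakly_reversible R"
    and "decomposition R Rs k"
    and "incidence_independent R Rs k"
  shows "\<forall>i<k. weakly_reversible (Rs i)"
proof (intro allI impI)
  fix i assume ik: "i < k"
  have finR: "finite R" using assms(1) unfolding crn_def by (meson finite_SigmaI finite_subset)
  have dec: "(\<Union>i<k. Rs i) = R" "\<forall>i<k. \<forall>j<k. i \<noteq> j \<longrightarrow> Rs i \<inter> Rs j = {}"
    using assms(3) unfolding decomposition_def by auto
  have sub: "\<And>j. j < k \<Longrightarrow> Rs j \<subseteq> R" using dec(1) by auto
  have finj: "\<And>j. j < k \<Longrightarrow> finite (Rs j)" using sub finR finite_subset by blast
  have indep: "\<forall>v. (\<forall>i<k. v i \<in> incidence_image (Rs i)) \<and> (\<lambda>z. \<Sum>i<k. v i z) = (\<lambda>z. 0)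
           \<longrightarrow> (\<forall>i<k. v i = (\<lambda>z. 0))"
    using assms(4) unfolding incidence_independent_def by blast
  show "weakly_reversible (Rs i)"
  proof (rule wr_of, clarify)
    fix a b assume abi: "(a,b) \<in> Rs i"
    hence abR: "(a,b) \<in> R" using sub ik by auto
    have "(b,a) \<in> R\<^sup>*"
    proof -
      have aC: "a \<in> complexes R" using abR unfolding complexes_def by force
      have "{y. (a, y) \<in> (R \<union> R\<inverse>)\<^sup>*} \<in> linkage_classes R"
        unfolding linkage_classes_def using aC by blast
      hence "strongly_connected R {y. (a, y) \<in> (R \<union> R\<inverse>)\<^sup>*}"
        using assms(2) unfolding weakly_reversible_def by blast
      moreover have "b \<in> {y. (a, y) \<in> (R \<union> R\<inverse>)\<^sup>*}" using abR by auto
      moreover have "a \<in> {y. (a, y) \<in> (R \<union> R\<inverse>)\<^sup>*}" by auto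
      ultimately show ?thesis unfolding strongly_connected_def by blast
    qed
    then obtain \<beta> where b0: "\<forall>r. \<beta> r \<ge> 0" and bs: "\<forall>z. (\<Sum>r\<in>R. \<beta> r * (omega (snd r) z - omega (fst r) z)) = omega a z - omega b z"
      using path_flow[OF finR] by blast
    define \<gamma> where "\<gamma> = (\<lambda>r. \<beta> r + (if r = (a,b) then 1 else 0))"
    have g0: "\<forall>r. \<gamma> r \<ge> 0" using b0 by (simp add: \<gamma>_def)
    have gpos: "\<gamma> (a,b) > 0" using b0 by (simp add: \<gamma>_def add_nonneg_pos)
    have gz: "(\<Sum>r\<in>R. \<gamma> r * (omega (snd r) z - omega (fst r) z)) = 0" for z
    proof -
      have "(\<Sum>r\<in>R. \<gamma> r * (omega (snd r) z - omega (fst r) z))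
         = (\<Sum>r\<in>R. \<beta> r * (omega (snd r) z - omega (fst r) z))
           + (\<Sum>r\<in>R. (if r = (a,b) then (omega (snd r) z - omega (fst r) z) else 0))"
        unfolding \<gamma>_def sum.distrib[symmetric] by (rule sum.cong) (auto simp: algebra_simps)
      also have "\<dots> = omega a z - omega b z + (omega b z - omega a z)"
        using bs abR finR by (simp add: sum.delta')
      finally show ?thesis by simp
    qed
    define v where "v = (\<lambda>j z. \<Sum>r\<in>Rs j. \<gamma> r * (omega (snd r) z - omega (fst r) z))"
    have vin: "\<forall>j<k. v j \<in> incidence_image (Rs j)"
      unfolding v_def incidence_image_def by blast
    have vsum: "(\<lambda>z. \<Sum>j<k. v j z) = (\<lambda>z. 0)"
    proof
      fix z
      have "(\<Sum>j<k. v j z) = (\<Sum>r\<in>(\<Union>j<k. Rs j). \<gamma> r * (omega (snd r) z - omega (fst r) z))"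
        unfolding v_def
        by (rule sum.UNION_disjoint[symmetric]) (use finj dec(2) in auto)
      also have "\<dots> = 0" using dec(1) gz by simp
      finally show "(\<Sum>j<k. v j z) = 0" .
    qed
    have "v i = (\<lambda>z. 0)" using indep vin vsum ik by blast
    hence "\<forall>z. (\<Sum>r\<in>Rs i. \<gamma> r * (omega (snd r) z - omega (fst r) z)) = 0"
      unfolding v_def by (metis)
    thus "(b,a) \<in> (Rs i)\<^sup>*"
      by (rule flow_reach[OF finj[OF ik] g0 _ abi gpos])
  qed
qed

end
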